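(* The $K$-bilinear map $\psi:\mathfrak{stl}_3(R)\times\mathfrak{stl}_3(R)\to\mathcal U$ defined below is a Leibniz $2$-cocycle, i.e. $\psi(x,[y,z])+\psi([x,z],y)-\psi([x,y],z)=0$ for all $x,y,z\in\mathfrak{stl}_3(R)$.
   Context: $K$ unital commutative ring, $R$ unital associative $K$-algebra, free as $K$-module with basis containing $1$. Leibniz algebra: $K$-bilinear bracket with $[x,[y,z]]=[[x,y],z]-[[x,z],y]$. $\mathfrak{stl}_3(R)$: Leibniz algebra over $K$ generated by $X_{ij}(a)$, $a\in R$, $1\le i\ne j\le 3$, subject to $K$-linearity in $a$, $[X_{ij}(a),X_{jk}(b)]=X_{ik}(ab)$ and $[X_{ij}(a),X_{ki}(b)]=-X_{kj}(ba)$ for distinct $i,j,k$, $[X_{ij}(a),X_{kl}(b)]=0$ for $j\ne k$, $i\ne l$. $H$ is the $K$-span of all $[X_{ij}(a),X_{ji}(b)]$; $\mathfrak{stl}_3(R)=H\oplus\bigoplus_{i\ne j}X_{ij}(R)$ with $a\mapsto X_{ij}(a)$ injective. $R_3=R/\mathcal I_3$ with $\mathcal I_3=3R+R[R,R]$ the ideal generated by all $3a$ and $ab-ba$; $\bar a$ the class of $a$. $\mathcal U=R_3^6$ with coordinates indexed by $\{1,2,3,-1,-2,-3\}$; $\bar a^{(m)}$ denotes the element with coordinate $\bar a$ at index $m$ and $0$ elsewhere. For $m\ne n$ in $\{1,2,3\}$, $\mathrm{sign}(m,n)=1$ if $m<n$ and $-1$ if $m>n$. $\psi$ is the $K$-bilinear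 map with $\psi(X_{ij}(a),X_{ik}(b))=\mathrm{sign}(j,k)\,(\overline{ab})^{(i)}$ and $\psi(X_{ij}(a),X_{kj}(b))=\mathrm{sign}(i,k)\,(\overline{ab})^{(-j)}$ for $a,b\in R$ and distinct $i,j,k$, $\psi=0$ on all other pairs $X_{ij}(a),X_{kl}(b)$, and $\psi=0$ whenever an argument lies in $H$. *)

theory Defs
  imports Main "HOL.Modules"
begin

definition ideal_gen :: "'r::ring_1 set \<Rightarrow> 'r set" where
  "ideal_gen S = \<Inter>{I. S \<subseteq> I \<and> 0 \<in> I \<and> (\<forall>x\<in>I. \<forall>y\<in>I. x + y \<in> I)
      \<and> (\<forall>x\<in>I. - x \<in> I) \<and> (\<forall>x\<in>I. \<forall>r. r * x \<in> I \<and> x * r \<in> I)}"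

definition I3 :: "'r::ring_1 set" where
  "I3 = ideal_gen ({3 * a | a. True} \<union> {a * b - b * a | a b. True})"

definition sgn3 :: "nat \<Rightarrow> nat \<Rightarrow> 'r::ring_1" where
  "sgn3 m n = (if m < n then 1 else - 1)"

definition pairs3 :: "(nat \<times> nat) set" where
  "pairs3 = {(i, j). i \<in> {1,2,3} \<and> j \<in> {1,2,3} \<and> i \<noteq> j}"

text \<open>Coordinate vector in R^6 (indices 1,2,3,-1,-2,-3) with entry c at index m.\<close>
definition single6 :: "int \<Rightarrow> 'r::zero \<Rightarrow> int \<Rightarrow> 'r" where
  "single6 m c = (\<lambda>n. if n = m then c else 0)"

end

theory Submission
  imports Defs
begin


definition isId :: "'r::ring_1 set \<Rightarrow> bool" where
 "isId I \<longleftrightarrow> 0 \<in> I \<and> (\<forall>x\<in>I. \<forall>y\<in>I. x + y \<in> I)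
      \<and> (\<forall>x\<in>I. - x \<in> I) \<and> (\<forall>x\<in>I. \<forall>r. r * x \<in> I \<and> x * r \<in> I)"

lemma ideal_gen_mem: "x \<in> ideal_gen S \<longleftrightarrow> (\<forall>I. S \<subseteq> I \<and> isId I \<longrightarrow> x \<in> I)"
  unfolding ideal_gen_def isId_def by auto

lemma I3_0: "0 \<in> I3" unfolding I3_def ideal_gen_mem isId_def by simp
lemma I3_add: "x \<in> I3 \<Longrightarrow> y \<in> I3 \<Longrightarrow> x + y \<in> I3" unfolding I3_def ideal_gen_mem isId_def by simp
lemma I3_uminus: "x \<in> I3 \<Longrightarrow> - x \<in> I3" unfolding I3_def ideal_gen_mem isId_def by simp
lemma I3_diff: "x \<in> I3 \<Longrightarrow> y \<in> I3 \<Longrightarrow> x - y \<in> I3"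
  using I3_add[of x "-y"] I3_uminus[of y] by simp
lemma I3_multL: "x \<in> I3 \<Longrightarrow> r * x \<in> I3" unfolding I3_def ideal_gen_mem isId_def by simp
lemma I3_multR: "x \<in> I3 \<Longrightarrow> x * r \<in> I3" unfolding I3_def ideal_gen_mem isId_def by simp
lemma I3_three: "3 * a \<in> I3" unfolding I3_def ideal_gen_mem by blast
lemma I3_comm: "a * b - b * a \<in> I3" unfolding I3_def ideal_gen_mem by blast



definition rel3 :: "'a::ring_1 \<Rightarrow> 'a \<Rightarrow> bool" where "rel3 x y \<longleftrightarrow> x - y \<in> I3"

lemma equivp_rel3: "equivp (rel3 :: 'a::ring_1 \<Rightarrow> _)"
proof (rule equivpI)
  show "reflp (rel3 :: 'a \<Rightarrow> _)" by (rule reflpI) (simp add: rel3_def I3_0)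
  show "symp (rel3 :: 'a \<Rightarrow> _)"
  proof (rule sympI)
    fix x y :: 'a assume "rel3 x y" hence "- (x - y) \<in> I3" unfolding rel3_def by (rule I3_uminus)
    thus "rel3 y x" by (simp add: rel3_def)
  qed
  show "transp (rel3 :: 'a \<Rightarrow> _)"
  proof (rule transpI)
    fix x y z :: 'a assume "rel3 x y" "rel3 y z" hence "(x - y) + (y - z) \<in> I3" unfolding rel3_def by (rule I3_add)
    thus "rel3 x z" by (simp add: rel3_def)
  qed
qed

quotient_type (overloaded) 'a q3 = "'a::ring_1" / rel3
  by (rule equivp_rel3)



lemma rel3_refl: "rel3 x x" by (simp add: rel3_def I3_0)

instantiation q3 :: (ring_1) comm_ring
begin
lift_definition zero_q3 :: "'a q3" is 0 .
lift_definition plus_q3 :: "'a q3 \<Rightarrow> 'a q3 \<Rightarrow> 'a q3" is "(+)"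
proof -
  fix x x' y y' :: 'a assume "rel3 x x'" "rel3 y y'"
  hence "(x - x') + (y - y') \<in> I3" unfolding rel3_def by (intro I3_add)
  thus "rel3 (x + y) (x' + y')" unfolding rel3_def by (simp add: algebra_simps)
qed
lift_definition uminus_q3 :: "'a q3 \<Rightarrow> 'a q3" is uminus
proof -
  fix x x' :: 'a assume "rel3 x x'"
  hence "- (x - x') \<in> I3" unfolding rel3_def by (intro I3_uminus)
  thus "rel3 (- x) (- x')" unfolding rel3_def by (simp add: algebra_simps)
qed
lift_definition minus_q3 :: "'a q3 \<Rightarrow> 'a q3 \<Rightarrow> 'a q3" is "(-)"
proof -
  fix x x' y y' :: 'a assume "rel3 x x'" "rel3 y y'"
  hence "(x - x') - (y - y') \<in> I3" unfolding rel3_def by (rule I3_diff)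
  thus "rel3 (x - y) (x' - y')" unfolding rel3_def by (simp add: algebra_simps)
qed
lift_definition times_q3 :: "'a q3 \<Rightarrow> 'a q3 \<Rightarrow> 'a q3" is "(*)"
proof -
  fix x x' y y' :: 'a assume "rel3 x x'" "rel3 y y'"
  hence "x * (y - y') + (x - x') * y' \<in> I3" unfolding rel3_def by (intro I3_add I3_multL I3_multR)
  thus "rel3 (x * y) (x' * y')" unfolding rel3_def by (simp add: algebra_simps)
qed
instance
proof
  fix a b c :: "'a q3"
  show "a * b * c = a * (b * c)" by transfer (simp add: mult.assoc rel3_refl)
  show "a * b = b * a" by transfer (simp add: rel3_def I3_comm)
  show "a + b + c = a + (b + c)" by transfer (simp add: add.assoc rel3_refl)
  show "a + b = b + a" by transfer (simp add: add.commute rel3_refl)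
  show "0 + a = a" by transfer (simp add: rel3_refl)
  show "- a + a = 0" by transfer (simp add: rel3_refl)
  show "a - b = a + - b" by transfer (simp add: rel3_refl)
  show "(a + b) * c = a * c + b * c" by transfer (simp add: distrib_right rel3_refl)
qed
end

definition q :: "'a::ring_1 \<Rightarrow> 'a q3" where "q = abs_q3"

lemma q_add[simp]: "q (x + y) = q x + q y" unfolding q_def by transfer (simp add: rel3_refl)
lemma q_diff[simp]: "q (x - y) = q x - q y" unfolding q_def by transfer (simp add: rel3_refl)
lemma q_uminus[simp]: "q (- x) = - q x" unfolding q_def by transfer (simp add: rel3_refl)
lemma q_mult[simp]: "q (x * y) = q x * q y" unfolding q_def by transfer (simp add: rel3_refl)
lemma q_zero[simp]: "q 0 = 0" unfolding q_def by transfer (simp add: rel3_refl)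
lemma q_zero_iff: "q x = 0 \<longleftrightarrow> x \<in> I3" unfolding q_def
  by (metis (mono_tags) Quotient3_rel_abs Quotient3_q3 diff_zero q3.abs_eq_iff rel3_def zero_q3.abs_eq)
lemma three_sum: "(3::'a::ring_1) * x = x + x + x"
proof -
  have "(3::'a) = 1 + 1 + 1" by simp
  hence "(3::'a) * x = (1 + 1 + 1) * x" by simp
  also have "\<dots> = x + x + x" by (simp only: distrib_right mult_1_left)
  finally show ?thesis .
qed
lemma q3_three: "(y::'a::ring_1 q3) + y + y = 0"
  by transfer (simp add: rel3_def flip: three_sum add: I3_three)
lemma q3_neg: "- (y::'a::ring_1 q3) = y + y"
  using q3_three[of y] by (metis add.assoc add_eq_0_iff2 add.commute)
lemma q3_diff: "(x::'a::ring_1 q3) - y = x + (y + y)"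
  by (simp add: q3_neg[symmetric])
lemma q3_3: "(y::'a::ring_1 q3) + (y + y) = 0"
  using q3_three[of y] by (simp add: add.assoc)
lemma q3_3': "(y::'a::ring_1 q3) + (y + (y + z)) = z"
  using q3_three[of y] by (metis add.assoc add_0)
lemmas q3s = q3_neg q3_diff q3_3 q3_3' add_ac mult_ac



locale stl =
  fixes smR :: "'k::comm_ring_1 \<Rightarrow> 'r::ring_1 \<Rightarrow> 'r"
    and smL :: "'k \<Rightarrow> 'l::ab_group_add \<Rightarrow> 'l"
    and br :: "'l \<Rightarrow> 'l \<Rightarrow> 'l"
    and X :: "nat \<Rightarrow> nat \<Rightarrow> 'r \<Rightarrow> 'l"
    and H :: "'l set"
    and \<psi> :: "'l \<Rightarrow> 'l \<Rightarrow> int \<Rightarrow> 'r"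
  assumes modR: "module smR"
    and algR: "\<And>c a b. smR c (a * b) = smR c a * b \<and> smR c (a * b) = a * smR c b"
    and modL: "module smL"
    and br_add1: "\<And>x x' y. br (x + x') y = br x y + br x' y"
    and br_add2: "\<And>x y y'. br x (y + y') = br x y + br x y'"
    and br_sm1: "\<And>c x y. br (smL c x) y = smL c (br x y)"
    and br_sm2: "\<And>c x y. br x (smL c y) = smL c (br x y)"
    and leibniz: "\<And>x y z. br x (br y z) = br (br x y) z - br (br x z) y"
    and X_add: "\<And>i j a b. X i j (a + b) = X i j a + X i j b"
    and X_sm: "\<And>i j c a. X i j (smR c a) = smL c (X i j a)"
    and rel1: "\<And>i j k a b. i \<in> {1,2,3} \<Longrightarrow> j \<in> {1,2,3} \<Longrightarrow> k \<in> {1,2,3} \<Longrightarrow>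
                 i \<noteq> j \<Longrightarrow> j \<noteq> k \<Longrightarrow> i \<noteq> k \<Longrightarrow> br (X i j a) (X j k b) = X i k (a * b)"
    and rel2: "\<And>i j k a b. i \<in> {1,2,3} \<Longrightarrow> j \<in> {1,2,3} \<Longrightarrow> k \<in> {1,2,3} \<Longrightarrow>
                 i \<noteq> j \<Longrightarrow> j \<noteq> k \<Longrightarrow> i \<noteq> k \<Longrightarrow> br (X i j a) (X k i b) = - X k j (b * a)"
    and rel3: "\<And>i j k l a b. (i, j) \<in> pairs3 \<Longrightarrow> (k, l) \<in> pairs3 \<Longrightarrow>
                 j \<noteq> k \<Longrightarrow> i \<noteq> l \<Longrightarrow> br (X i j a) (X k l b) = 0"
    and H_def: "H = module.span smL {br (X i j a) (X j i b) | i j a b. (i, j) \<in> pairs3}"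
    and decomp: "\<And>x. \<exists>!(h, a). h \<in> H \<and> (\<forall>p. p \<notin> pairs3 \<longrightarrow> a p = 0) \<and>
                   x = h + (\<Sum>(i, j)\<in>pairs3. X i j (a (i, j)))"
    and psi_add1: "\<And>x x' y m. \<psi> (x + x') y m = \<psi> x y m + \<psi> x' y m"
    and psi_add2: "\<And>x y y' m. \<psi> x (y + y') m = \<psi> x y m + \<psi> x y' m"
    and psi_sm1: "\<And>c x y m. \<psi> (smL c x) y m = smR c (\<psi> x y m)"
    and psi_sm2: "\<And>c x y m. \<psi> x (smL c y) m = smR c (\<psi> x y m)"
    and psi_row: "\<And>i j k a b. i \<in> {1,2,3} \<Longrightarrow> j \<in> {1,2,3} \<Longrightarrow> k \<in> {1,2,3} \<Longrightarrow>
                 i \<noteq> j \<Longrightarrow> j \<noteq> k \<Longrightarrow> i \<noteq> k \<Longrightarrow>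
                 \<psi> (X i j a) (X i k b) = single6 (int i) (sgn3 j k * (a * b))"
    and psi_col: "\<And>i j k a b. i \<in> {1,2,3} \<Longrightarrow> j \<in> {1,2,3} \<Longrightarrow> k \<in> {1,2,3} \<Longrightarrow>
                 i \<noteq> j \<Longrightarrow> j \<noteq> k \<Longrightarrow> i \<noteq> k \<Longrightarrow>
                 \<psi> (X i j a) (X k j b) = single6 (- int j) (sgn3 i k * (a * b))"
    and psi_other: "\<And>i j k l a b. (i, j) \<in> pairs3 \<Longrightarrow> (k, l) \<in> pairs3 \<Longrightarrow>
                 \<not> (i = k \<and> j \<noteq> l) \<Longrightarrow> \<not> (j = l \<and> i \<noteq> k) \<Longrightarrow> \<psi> (X i j a) (X k l b) = (\<lambda>m. 0)"
    and psi_H1: "\<And>h y. h \<in> H \<Longrightarrow> \<psi> h y = (\<lambda>m. 0)"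
    and psi_H2: "\<And>x h. h \<in> H \<Longrightarrow> \<psi> x h = (\<lambda>m. 0)"
begin

lemma br_zero1[simp]: "br 0 y = 0" using br_add1[of 0 0 y] by simp
lemma br_zero2[simp]: "br x 0 = 0" using br_add2[of x 0 0] by simp
lemma br_neg1[simp]: "br (- x) y = - br x y" using br_add1[of x "-x" y] by (metis add.right_inverse br_zero1 minus_unique)
lemma br_neg2[simp]: "br x (- y) = - br x y" using br_add2[of x y "-y"] by (metis add.right_inverse br_zero2 minus_unique)
lemma br_diff1[simp]: "br (x - x') y = br x y - br x' y" using br_add1[of x "-x'" y] by simp
lemma br_diff2[simp]: "br x (y - y') = br x y - br x y'" using br_add2[of x y "-y'"] by simp
lemma X_zero[simp]: "X i j 0 = 0" using X_add[of i j 0 0] by simp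
lemma X_neg[simp]: "X i j (- a) = - X i j a" using X_add[of i j a "-a"] by (metis add.right_inverse X_zero minus_unique)
lemma X_diff[simp]: "X i j (a - b) = X i j a - X i j b" using X_add[of i j a "-b"] by simp
lemma psi_zero1[simp]: "\<psi> 0 y m = 0" using psi_add1[of 0 0 y m] by simp
lemma psi_zero2[simp]: "\<psi> x 0 m = 0" using psi_add2[of x 0 0 m] by simp
lemma psi_neg1[simp]: "\<psi> (- x) y m = - \<psi> x y m" using psi_add1[of x "-x" y m] by (metis add.right_inverse psi_zero1 minus_unique)
lemma psi_neg2[simp]: "\<psi> x (- y) m = - \<psi> x y m" using psi_add2[of x y "-y" m] by (metis add.right_inverse psi_zero2 minus_unique)
lemma psi_diff1[simp]: "\<psi> (x - x') y m = \<psi> x y m - \<psi> x' y m" using psi_add1[of x "-x'" y m] by simp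
lemma psi_diff2[simp]: "\<psi> x (y - y') m = \<psi> x y m - \<psi> x y' m" using psi_add2[of x y "-y'" m] by simp

definition Hg :: "nat \<Rightarrow> nat \<Rightarrow> 'r \<Rightarrow> 'r \<Rightarrow> 'l" where "Hg i j a b = br (X i j a) (X j i b)"

lemma Hg_in_H: "(i, j) \<in> pairs3 \<Longrightarrow> Hg i j a b \<in> H"
  unfolding H_def Hg_def by (rule module.span_base[OF modL]) blast

lemma H_diff: "x \<in> H \<Longrightarrow> y \<in> H \<Longrightarrow> x - y \<in> H"
  unfolding H_def by (rule module.span_diff[OF modL])

lemma psi_Hg1[simp]: "(i, j) \<in> pairs3 \<Longrightarrow> \<psi> (Hg i j a b) y m = 0"
  using psi_H1[OF Hg_in_H] by simp
lemma psi_Hg2[simp]: "(i, j) \<in> pairs3 \<Longrightarrow> \<psi> y (Hg i j a b) m = 0"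
  using psi_H2[OF Hg_in_H] by simp

lemma lb: "br (br u v) w = br u (br v w) + br (br u w) v"
  using leibniz[of u v w] by simp

lemmas rels = rel1 rel2 rel3

lemma pairs3I: "i \<in> {1,2,3} \<Longrightarrow> j \<in> {1,2,3} \<Longrightarrow> i \<noteq> j \<Longrightarrow> (i,j) \<in> pairs3"
  by (simp add: pairs3_def)

context
  fixes i j t :: nat
  assumes ijt: "i \<in> {1,2,3}" "j \<in> {1,2,3}" "t \<in> {1,2,3}" "i \<noteq> j" "i \<noteq> t" "j \<noteq> t"
begin

lemma B1: "br (Hg i j a b) (X i t c) = X i t (a*b*c)"
  unfolding Hg_def by (subst lb) (use ijt in \<open>simp add: rels pairs3I mult.assoc\<close>)
lemma B2: "br (Hg i j a b) (X j t c) = X j t (- (b*a*c))"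
  unfolding Hg_def by (subst lb) (use ijt in \<open>simp add: rels pairs3I mult.assoc\<close>)
lemma B3: "br (Hg i j a b) (X t i c) = X t i (- (c*a*b))"
  unfolding Hg_def by (subst lb) (use ijt in \<open>simp add: rels pairs3I mult.assoc\<close>)
lemma B4: "br (Hg i j a b) (X t j c) = X t j (c*b*a)"
  unfolding Hg_def by (subst lb) (use ijt in \<open>simp add: rels pairs3I mult.assoc\<close>)

lemma B5: "br (Hg i j a b) (X i j c) = X i j (a*b*c + c*b*a)"
proof -
  have e: "X i j c = br (X i t c) (X t j 1)" using ijt by (simp add: rel1)
  have "br (Hg i j a b) (X i j c) = br (br (Hg i j a b) (X i t c)) (X t j 1) - br (br (Hg i j a b) (X t j 1)) (X i t c)"
    by (subst e) (rule leibniz)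
  also have "\<dots> = br (X i t (a*b*c)) (X t j 1) - br (X t j (1*b*a)) (X i t c)" by (simp only: B1 B4)
  also have "\<dots> = X i j (a*b*c) - (- X i j (c*(b*a)))" using ijt by (simp only: rel1 rel2 mult_1_right mult_1_left simp_thms insert_iff empty_iff)
  also have "\<dots> = X i j (a*b*c + c*b*a)" by (simp add: X_add mult.assoc)
  finally show ?thesis .
qed

lemma B6: "br (Hg i j a b) (X j i c) = X j i (- (b*a*c) - c*a*b)"
proof -
  have e: "X j i c = br (X j t c) (X t i 1)" using ijt by (simp add: rel1)
  have "br (Hg i j a b) (X j i c) = br (br (Hg i j a b) (X j t c)) (X t i 1) - br (br (Hg i j a b) (X t i 1)) (X j t c)"
    by (subst e) (rule leibniz)
  also have "\<dots> = br (X j t (- (b*a*c))) (X t i 1) - br (X t i (- (1*a*b))) (X j t c)" by (simp only: B2 B3)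
  also have "\<dots> = X j i (- (b*a*c) * 1) - (- X j i (c * (- (1*a*b))))" using ijt by (simp only: rel1 rel2 simp_thms insert_iff empty_iff)
  also have "\<dots> = X j i (- (b*a*c) - c*a*b)" by (simp add: X_add mult.assoc)
  finally show ?thesis .
qed
end

lemma ex_t: "i \<in> {1,2,3} \<Longrightarrow> j \<in> {1,2,3} \<Longrightarrow> i \<noteq> j \<Longrightarrow> \<exists>t::nat. t \<in> {1,2,3} \<and> i \<noteq> t \<and> j \<noteq> t"
  by (rule exI[of _ "6 - i - j"]) auto

lemma B5s: "i \<in> {1,2,3} \<Longrightarrow> j \<in> {1,2,3} \<Longrightarrow> i \<noteq> j \<Longrightarrow> br (Hg i j a b) (X i j c) = X i j (a*b*c + c*b*a)"
proof -
  assume a: "i \<in> {1,2,3}" "j \<in> {1,2,3}" "i \<noteq> j"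
  obtain t where "t \<in> {1,2,3}" "i \<noteq> t" "j \<noteq> t" using ex_t[OF a] by blast
  from B5[OF a(1,2) this(1) a(3) this(2,3)] show ?thesis .
qed
lemma B6s: "i \<in> {1,2,3} \<Longrightarrow> j \<in> {1,2,3} \<Longrightarrow> i \<noteq> j \<Longrightarrow> br (Hg i j a b) (X j i c) = X j i (- (b*a*c) - c*a*b)"
proof -
  assume a: "i \<in> {1,2,3}" "j \<in> {1,2,3}" "i \<noteq> j"
  obtain t where "t \<in> {1,2,3}" "i \<noteq> t" "j \<noteq> t" using ex_t[OF a] by blast
  from B6[OF a(1,2) this(1) a(3) this(2,3)] show ?thesis .
qed

lemma Cr: "br w (Hg i j a b) = br (br w (X i j a)) (X j i b) - br (br w (X j i b)) (X i j a)"
  unfolding Hg_def by (rule leibniz)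

lemma pairs3_eq: "pairs3 = {(1,2),(1,3),(2,1),(2,3),(3,1),(3,2)}"
  unfolding pairs3_def by auto

lemma Bex: "(i,j) \<in> pairs3 \<Longrightarrow> (k,l) \<in> pairs3 \<Longrightarrow> \<exists>r. br (Hg i j a b) (X k l c) = X k l r"
  unfolding pairs3_eq
  by (auto simp: B1 B2 B3 B4 B5s B6s simp del: X_neg X_diff)

lemma HgHg: "(i,j) \<in> pairs3 \<Longrightarrow> (k,l) \<in> pairs3 \<Longrightarrow> br (Hg i j a b) (Hg k l c d) \<in> H"
proof -
  assume p: "(i,j) \<in> pairs3" "(k,l) \<in> pairs3"
  hence p': "(l,k) \<in> pairs3" by (auto simp: pairs3_def)
  obtain r where r: "br (Hg i j a b) (X k l c) = X k l r" using Bex[OF p] by blast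
  obtain r' where r': "br (Hg i j a b) (X l k d) = X l k r'" using Bex[OF p(1) p'] by blast
  have "br (Hg i j a b) (Hg k l c d) = br (br (Hg i j a b) (X k l c)) (X l k d) - br (br (Hg i j a b) (X l k d)) (X k l c)"
    by (rule Cr)
  also have "\<dots> = Hg k l r d - Hg l k r' c" by (simp only: r r', simp only: Hg_def)
  finally have "br (Hg i j a b) (Hg k l c d) = Hg k l r d - Hg l k r' c" .
  thus ?thesis using H_diff[OF Hg_in_H[OF p(2)] Hg_in_H[OF p']] by simp
qed

definition F where "F x y z m = \<psi> x (br y z) m + \<psi> (br x z) y m - \<psi> (br x y) z m"

lemma Hg_fold: "br (X i j a) (X j i b) = Hg i j a b" by (simp add: Hg_def)

lemma psi_row_m: "i \<in> {1,2,3} \<Longrightarrow> j \<in> {1,2,3} \<Longrightarrow> k \<in> {1,2,3} \<Longrightarrow>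
                 i \<noteq> j \<Longrightarrow> j \<noteq> k \<Longrightarrow> i \<noteq> k \<Longrightarrow>
                 \<psi> (X i j a) (X i k b) m = (if m = int i then sgn3 j k * (a * b) else 0)"
  by (simp add: psi_row single6_def)
lemma psi_col_m: "i \<in> {1,2,3} \<Longrightarrow> j \<in> {1,2,3} \<Longrightarrow> k \<in> {1,2,3} \<Longrightarrow>
                 i \<noteq> j \<Longrightarrow> j \<noteq> k \<Longrightarrow> i \<noteq> k \<Longrightarrow>
                 \<psi> (X i j a) (X k j b) m = (if m = - int j then sgn3 i k * (a * b) else 0)"
  by (simp add: psi_col single6_def)
lemma psi_other_m: "(i, j) \<in> pairs3 \<Longrightarrow> (k, l) \<in> pairs3 \<Longrightarrow>
                 \<not> (i = k \<and> j \<noteq> l) \<Longrightarrow> \<not> (j = l \<and> i \<noteq> k) \<Longrightarrow> \<psi> (X i j a) (X k l b) m = 0"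
  by (simp add: psi_other)

lemmas cs = rel1 rel2 rel3 Hg_fold B1 B2 B3 B4 B5s B6s Cr br_add1 br_add2 X_add psi_add1 psi_add2
  psi_row_m psi_col_m psi_other_m pairs3_def sgn3_def

lemma XXX_12: "(k,l)\<in>pairs3 \<Longrightarrow> (p,r)\<in>pairs3 \<Longrightarrow> m \<in> {1,2,3,-1,-2,-3} \<Longrightarrow> q (F (X 1 2 a) (X k l b) (X p r c) m) = 0"
  unfolding pairs3_eq by (auto simp: F_def cs q3s)

lemma XXX_13: "(k,l)\<in>pairs3 \<Longrightarrow> (p,r)\<in>pairs3 \<Longrightarrow> m \<in> {1,2,3,-1,-2,-3} \<Longrightarrow> q (F (X 1 3 a) (X k l b) (X p r c) m) = 0"
  unfolding pairs3_eq by (auto simp: F_def cs q3s)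

lemma XXX_21: "(k,l)\<in>pairs3 \<Longrightarrow> (p,r)\<in>pairs3 \<Longrightarrow> m \<in> {1,2,3,-1,-2,-3} \<Longrightarrow> q (F (X 2 1 a) (X k l b) (X p r c) m) = 0"
  unfolding pairs3_eq by (auto simp: F_def cs q3s)

lemma XXX_23: "(k,l)\<in>pairs3 \<Longrightarrow> (p,r)\<in>pairs3 \<Longrightarrow> m \<in> {1,2,3,-1,-2,-3} \<Longrightarrow> q (F (X 2 3 a) (X k l b) (X p r c) m) = 0"
  unfolding pairs3_eq by (auto simp: F_def cs q3s)

lemma XXX_31: "(k,l)\<in>pairs3 \<Longrightarrow> (p,r)\<in>pairs3 \<Longrightarrow> m \<in> {1,2,3,-1,-2,-3} \<Longrightarrow> q (F (X 3 1 a) (X k l b) (X p r c) m) = 0"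
  unfolding pairs3_eq by (auto simp: F_def cs q3s)

lemma XXX_32: "(k,l)\<in>pairs3 \<Longrightarrow> (p,r)\<in>pairs3 \<Longrightarrow> m \<in> {1,2,3,-1,-2,-3} \<Longrightarrow> q (F (X 3 2 a) (X k l b) (X p r c) m) = 0"
  unfolding pairs3_eq by (auto simp: F_def cs q3s)

lemma XXX: assumes "(i,j)\<in>pairs3" "(k,l)\<in>pairs3" "(p,r)\<in>pairs3" "m \<in> {1,2,3,-1,-2,-3}" shows "F (X i j a) (X k l b) (X p r c) m \<in> I3"
proof -
  from assms(1) have "(i,j) = (1,2) \<or> (i,j) = (1,3) \<or> (i,j) = (2,1) \<or> (i,j) = (2,3) \<or> (i,j) = (3,1) \<or> (i,j) = (3,2)"
    by (simp add: pairs3_eq)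
  thus ?thesis
  proof (elim disjE)
      assume "(i,j) = (1,2)" thus ?thesis using XXX_12[OF assms(2-4)] by (simp add: q_zero_iff)
    next
      assume "(i,j) = (1,3)" thus ?thesis using XXX_13[OF assms(2-4)] by (simp add: q_zero_iff)
    next
      assume "(i,j) = (2,1)" thus ?thesis using XXX_21[OF assms(2-4)] by (simp add: q_zero_iff)
    next
      assume "(i,j) = (2,3)" thus ?thesis using XXX_23[OF assms(2-4)] by (simp add: q_zero_iff)
    next
      assume "(i,j) = (3,1)" thus ?thesis using XXX_31[OF assms(2-4)] by (simp add: q_zero_iff)
    next
      assume "(i,j) = (3,2)" thus ?thesis using XXX_32[OF assms(2-4)] by (simp add: q_zero_iff)
  qed
qed

lemma HXX_12: "(k,l)\<in>pairs3 \<Longrightarrow> (p,r)\<in>pairs3 \<Longrightarrow> m \<in> {1,2,3,-1,-2,-3} \<Longrightarrow> q (F (Hg 1 2 a d) (X k l b) (X p r c) m) = 0"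
  unfolding pairs3_eq by (auto simp: F_def cs q3s)

lemma HXX_13: "(k,l)\<in>pairs3 \<Longrightarrow> (p,r)\<in>pairs3 \<Longrightarrow> m \<in> {1,2,3,-1,-2,-3} \<Longrightarrow> q (F (Hg 1 3 a d) (X k l b) (X p r c) m) = 0"
  unfolding pairs3_eq by (auto simp: F_def cs q3s)

lemma HXX_21: "(k,l)\<in>pairs3 \<Longrightarrow> (p,r)\<in>pairs3 \<Longrightarrow> m \<in> {1,2,3,-1,-2,-3} \<Longrightarrow> q (F (Hg 2 1 a d) (X k l b) (X p r c) m) = 0"
  unfolding pairs3_eq by (auto simp: F_def cs q3s)

lemma HXX_23: "(k,l)\<in>pairs3 \<Longrightarrow> (p,r)\<in>pairs3 \<Longrightarrow> m \<in> {1,2,3,-1,-2,-3} \<Longrightarrow> q (F (Hg 2 3 a d) (X k l b) (X p r c) m) = 0"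
  unfolding pairs3_eq by (auto simp: F_def cs q3s)

lemma HXX_31: "(k,l)\<in>pairs3 \<Longrightarrow> (p,r)\<in>pairs3 \<Longrightarrow> m \<in> {1,2,3,-1,-2,-3} \<Longrightarrow> q (F (Hg 3 1 a d) (X k l b) (X p r c) m) = 0"
  unfolding pairs3_eq by (auto simp: F_def cs q3s)

lemma HXX_32: "(k,l)\<in>pairs3 \<Longrightarrow> (p,r)\<in>pairs3 \<Longrightarrow> m \<in> {1,2,3,-1,-2,-3} \<Longrightarrow> q (F (Hg 3 2 a d) (X k l b) (X p r c) m) = 0"
  unfolding pairs3_eq by (auto simp: F_def cs q3s)

lemma HXX: assumes "(i,j)\<in>pairs3" "(k,l)\<in>pairs3" "(p,r)\<in>pairs3" "m \<in> {1,2,3,-1,-2,-3}" shows "F (Hg i j a d) (X k l b) (X p r c) m \<in> I3"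
proof -
  from assms(1) have "(i,j) = (1,2) \<or> (i,j) = (1,3) \<or> (i,j) = (2,1) \<or> (i,j) = (2,3) \<or> (i,j) = (3,1) \<or> (i,j) = (3,2)"
    by (simp add: pairs3_eq)
  thus ?thesis
  proof (elim disjE)
      assume "(i,j) = (1,2)" thus ?thesis using HXX_12[OF assms(2-4)] by (simp add: q_zero_iff)
    next
      assume "(i,j) = (1,3)" thus ?thesis using HXX_13[OF assms(2-4)] by (simp add: q_zero_iff)
    next
      assume "(i,j) = (2,1)" thus ?thesis using HXX_21[OF assms(2-4)] by (simp add: q_zero_iff)
    next
      assume "(i,j) = (2,3)" thus ?thesis using HXX_23[OF assms(2-4)] by (simp add: q_zero_iff)
    next
      assume "(i,j) = (3,1)" thus ?thesis using HXX_31[OF assms(2-4)] by (simp add: q_zero_iff)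
    next
      assume "(i,j) = (3,2)" thus ?thesis using HXX_32[OF assms(2-4)] by (simp add: q_zero_iff)
  qed
qed

lemma XHX_12: "(k,l)\<in>pairs3 \<Longrightarrow> (p,r)\<in>pairs3 \<Longrightarrow> m \<in> {1,2,3,-1,-2,-3} \<Longrightarrow> q (F (X k l b) (Hg 1 2 a d) (X p r c) m) = 0"
  unfolding pairs3_eq by (auto simp: F_def cs q3s)

lemma XHX_13: "(k,l)\<in>pairs3 \<Longrightarrow> (p,r)\<in>pairs3 \<Longrightarrow> m \<in> {1,2,3,-1,-2,-3} \<Longrightarrow> q (F (X k l b) (Hg 1 3 a d) (X p r c) m) = 0"
  unfolding pairs3_eq by (auto simp: F_def cs q3s)

lemma XHX_21: "(k,l)\<in>pairs3 \<Longrightarrow> (p,r)\<in>pairs3 \<Longrightarrow> m \<in> {1,2,3,-1,-2,-3} \<Longrightarrow> q (F (X k l b) (Hg 2 1 a d) (X p r c) m) = 0"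
  unfolding pairs3_eq by (auto simp: F_def cs q3s)

lemma XHX_23: "(k,l)\<in>pairs3 \<Longrightarrow> (p,r)\<in>pairs3 \<Longrightarrow> m \<in> {1,2,3,-1,-2,-3} \<Longrightarrow> q (F (X k l b) (Hg 2 3 a d) (X p r c) m) = 0"
  unfolding pairs3_eq by (auto simp: F_def cs q3s)

lemma XHX_31: "(k,l)\<in>pairs3 \<Longrightarrow> (p,r)\<in>pairs3 \<Longrightarrow> m \<in> {1,2,3,-1,-2,-3} \<Longrightarrow> q (F (X k l b) (Hg 3 1 a d) (X p r c) m) = 0"
  unfolding pairs3_eq by (auto simp: F_def cs q3s)

lemma XHX_32: "(k,l)\<in>pairs3 \<Longrightarrow> (p,r)\<in>pairs3 \<Longrightarrow> m \<in> {1,2,3,-1,-2,-3} \<Longrightarrow> q (F (X k l b) (Hg 3 2 a d) (X p r c) m) = 0"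
  unfolding pairs3_eq by (auto simp: F_def cs q3s)

lemma XHX: assumes "(i,j)\<in>pairs3" "(k,l)\<in>pairs3" "(p,r)\<in>pairs3" "m \<in> {1,2,3,-1,-2,-3}" shows "F (X k l b) (Hg i j a d) (X p r c) m \<in> I3"
proof -
  from assms(1) have "(i,j) = (1,2) \<or> (i,j) = (1,3) \<or> (i,j) = (2,1) \<or> (i,j) = (2,3) \<or> (i,j) = (3,1) \<or> (i,j) = (3,2)"
    by (simp add: pairs3_eq)
  thus ?thesis
  proof (elim disjE)
      assume "(i,j) = (1,2)" thus ?thesis using XHX_12[OF assms(2-4)] by (simp add: q_zero_iff)
    next
      assume "(i,j) = (1,3)" thus ?thesis using XHX_13[OF assms(2-4)] by (simp add: q_zero_iff)
    next
      assume "(i,j) = (2,1)" thus ?thesis using XHX_21[OF assms(2-4)] by (simp add: q_zero_iff)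
    next
      assume "(i,j) = (2,3)" thus ?thesis using XHX_23[OF assms(2-4)] by (simp add: q_zero_iff)
    next
      assume "(i,j) = (3,1)" thus ?thesis using XHX_31[OF assms(2-4)] by (simp add: q_zero_iff)
    next
      assume "(i,j) = (3,2)" thus ?thesis using XHX_32[OF assms(2-4)] by (simp add: q_zero_iff)
  qed
qed

lemma XXH_12: "(k,l)\<in>pairs3 \<Longrightarrow> (p,r)\<in>pairs3 \<Longrightarrow> m \<in> {1,2,3,-1,-2,-3} \<Longrightarrow> q (F (X k l b) (X p r c) (Hg 1 2 a d) m) = 0"
  unfolding pairs3_eq by (auto simp: F_def cs q3s)

lemma XXH_13: "(k,l)\<in>pairs3 \<Longrightarrow> (p,r)\<in>pairs3 \<Longrightarrow> m \<in> {1,2,3,-1,-2,-3} \<Longrightarrow> q (F (X k l b) (X p r c) (Hg 1 3 a d) m) = 0"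
  unfolding pairs3_eq by (auto simp: F_def cs q3s)

lemma XXH_21: "(k,l)\<in>pairs3 \<Longrightarrow> (p,r)\<in>pairs3 \<Longrightarrow> m \<in> {1,2,3,-1,-2,-3} \<Longrightarrow> q (F (X k l b) (X p r c) (Hg 2 1 a d) m) = 0"
  unfolding pairs3_eq by (auto simp: F_def cs q3s)

lemma XXH_23: "(k,l)\<in>pairs3 \<Longrightarrow> (p,r)\<in>pairs3 \<Longrightarrow> m \<in> {1,2,3,-1,-2,-3} \<Longrightarrow> q (F (X k l b) (X p r c) (Hg 2 3 a d) m) = 0"
  unfolding pairs3_eq by (auto simp: F_def cs q3s)

lemma XXH_31: "(k,l)\<in>pairs3 \<Longrightarrow> (p,r)\<in>pairs3 \<Longrightarrow> m \<in> {1,2,3,-1,-2,-3} \<Longrightarrow> q (F (X k l b) (X p r c) (Hg 3 1 a d) m) = 0"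
  unfolding pairs3_eq by (auto simp: F_def cs q3s)

lemma XXH_32: "(k,l)\<in>pairs3 \<Longrightarrow> (p,r)\<in>pairs3 \<Longrightarrow> m \<in> {1,2,3,-1,-2,-3} \<Longrightarrow> q (F (X k l b) (X p r c) (Hg 3 2 a d) m) = 0"
  unfolding pairs3_eq by (auto simp: F_def cs q3s)

lemma XXH: assumes "(i,j)\<in>pairs3" "(k,l)\<in>pairs3" "(p,r)\<in>pairs3" "m \<in> {1,2,3,-1,-2,-3}" shows "F (X k l b) (X p r c) (Hg i j a d) m \<in> I3"
proof -
  from assms(1) have "(i,j) = (1,2) \<or> (i,j) = (1,3) \<or> (i,j) = (2,1) \<or> (i,j) = (2,3) \<or> (i,j) = (3,1) \<or> (i,j) = (3,2)"
    by (simp add: pairs3_eq)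
  thus ?thesis
  proof (elim disjE)
      assume "(i,j) = (1,2)" thus ?thesis using XXH_12[OF assms(2-4)] by (simp add: q_zero_iff)
    next
      assume "(i,j) = (1,3)" thus ?thesis using XXH_13[OF assms(2-4)] by (simp add: q_zero_iff)
    next
      assume "(i,j) = (2,1)" thus ?thesis using XXH_21[OF assms(2-4)] by (simp add: q_zero_iff)
    next
      assume "(i,j) = (2,3)" thus ?thesis using XXH_23[OF assms(2-4)] by (simp add: q_zero_iff)
    next
      assume "(i,j) = (3,1)" thus ?thesis using XXH_31[OF assms(2-4)] by (simp add: q_zero_iff)
    next
      assume "(i,j) = (3,2)" thus ?thesis using XXH_32[OF assms(2-4)] by (simp add: q_zero_iff)
  qed
qed


lemma psi_H1m: "h \<in> H \<Longrightarrow> \<psi> h y m = 0" using psi_H1 by simp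
lemma psi_H2m: "h \<in> H \<Longrightarrow> \<psi> x h m = 0" using psi_H2 by simp

lemma HHz: "(i,j)\<in>pairs3 \<Longrightarrow> (k,l)\<in>pairs3 \<Longrightarrow> F (Hg i j a b) (Hg k l c d) z m = 0"
  unfolding F_def using HgHg[of i j k l a b c d] by (simp add: psi_H1m)
lemma HyH: "(i,j)\<in>pairs3 \<Longrightarrow> (k,l)\<in>pairs3 \<Longrightarrow> F (Hg i j a b) y (Hg k l c d) m = 0"
  unfolding F_def using HgHg[of i j k l a b c d] by (simp add: psi_H1m)
lemma xHH: "(i,j)\<in>pairs3 \<Longrightarrow> (k,l)\<in>pairs3 \<Longrightarrow> F x (Hg i j a b) (Hg k l c d) m = 0"
  unfolding F_def using HgHg[of i j k l a b c d] by (simp add: psi_H2m)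

definition gen :: "'l \<Rightarrow> bool" where
  "gen g \<longleftrightarrow> (\<exists>i j a. (i,j)\<in>pairs3 \<and> g = X i j a) \<or> (\<exists>i j a b. (i,j)\<in>pairs3 \<and> g = Hg i j a b)"

lemma gen_case: "gen g1 \<Longrightarrow> gen g2 \<Longrightarrow> gen g3 \<Longrightarrow> m \<in> {1,2,3,-1,-2,-3} \<Longrightarrow> F g1 g2 g3 m \<in> I3"
  unfolding gen_def
  by (elim disjE exE conjE; simp only: XXX HXX XHX XXH HHz HyH xHH I3_0)

lemma sum_Q: "finite A \<Longrightarrow> Q 0 \<Longrightarrow> (\<And>x y. Q x \<Longrightarrow> Q y \<Longrightarrow> Q (x + y)) \<Longrightarrow> (\<forall>p\<in>A. Q (f p)) \<Longrightarrow> Q (sum f A)"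
  by (induction A rule: finite_induct) auto

lemma all_l:
  assumes Q0: "Q 0" and Qadd: "\<And>x y. Q x \<Longrightarrow> Q y \<Longrightarrow> Q (x + y)"
    and Qsm: "\<And>c x. Q x \<Longrightarrow> Q (smL c x)" and Qg: "\<And>g. gen g \<Longrightarrow> Q g"
  shows "Q x"
proof -
  obtain h a where h: "h \<in> H" and x: "x = h + (\<Sum>(i, j)\<in>pairs3. X i j (a (i, j)))"
    using decomp[of x] by (auto dest!: ex1_implies_ex)
  have "Q h"
  proof (rule module.span_induct_alt[OF modL])
    show "h \<in> module.span smL {br (X i j a) (X j i b) | i j a b. (i, j) \<in> pairs3}" using h H_def by simp
    show "Q 0" by (rule Q0)
  next
    fix c x y assume xs: "x \<in> {br (X i j a) (X j i b) | i j a b. (i, j) \<in> pairs3}" and "Q y"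
    then obtain i j a b where "(i,j)\<in>pairs3" "x = Hg i j a b" unfolding Hg_def by blast
    hence "Q x" using Qg unfolding gen_def by blast
    thus "Q (smL c x + y)" using \<open>Q y\<close> Qadd Qsm by blast
  qed
  moreover have "Q (\<Sum>(i, j)\<in>pairs3. X i j (a (i, j)))"
  proof (rule sum_Q[where Q = Q])
    show "finite pairs3" by (simp add: pairs3_eq)
    show "\<forall>p\<in>pairs3. Q (case p of (i, j) \<Rightarrow> X i j (a (i, j)))"
      using Qg unfolding gen_def by auto
  qed (use Q0 Qadd in auto)
  ultimately show ?thesis using x Qadd by simp
qed

lemma I3_sm: "r \<in> I3 \<Longrightarrow> smR c r \<in> I3"
proof -
  assume "r \<in> I3"
  have "smR c r = smR c (1 * r)" by simp
  also have "\<dots> = smR c 1 * r" using algR by blast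
  finally show ?thesis using I3_multL[OF \<open>r \<in> I3\<close>] by simp
qed

lemma smR_add: "smR c (x + y) = smR c x + smR c y" by (rule module.scale_right_distrib[OF modR])
lemma smR_diff: "smR c (x - y) = smR c x - smR c y" by (rule module.scale_right_diff_distrib[OF modR])

lemma F_add1: "F (x + x') y z m = F x y z m + F x' y z m" by (simp add: F_def br_add1 psi_add1 algebra_simps)
lemma F_add2: "F x (y + y') z m = F x y z m + F x y' z m" by (simp add: F_def br_add1 br_add2 psi_add1 psi_add2 algebra_simps)
lemma F_add3: "F x y (z + z') m = F x y z m + F x y z' m" by (simp add: F_def br_add1 br_add2 psi_add1 psi_add2 algebra_simps)
lemma F_sm1: "F (smL c x) y z m = smR c (F x y z m)" by (simp add: F_def br_sm1 psi_sm1 smR_add smR_diff)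
lemma F_sm2: "F x (smL c y) z m = smR c (F x y z m)" by (simp add: F_def br_sm1 br_sm2 psi_sm1 psi_sm2 smR_add smR_diff)
lemma F_sm3: "F x y (smL c z) m = smR c (F x y z m)" by (simp add: F_def br_sm1 br_sm2 psi_sm1 psi_sm2 smR_add smR_diff)
lemma F_01: "F 0 y z m = 0" by (simp add: F_def)
lemma F_02: "F x 0 z m = 0" by (simp add: F_def)
lemma F_03: "F x y 0 m = 0" by (simp add: F_def)

lemma main: "m \<in> {1,2,3,-1,-2,-3} \<Longrightarrow> F x y z m \<in> I3"
proof -
  assume m: "m \<in> {1,2,3,-1,-2,-3}"
  have A: "F g1 g2 z m \<in> I3" if "gen g1" "gen g2" for g1 g2 z
  proof (rule all_l[where Q = "\<lambda>z. F g1 g2 z m \<in> I3"])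
    show "F g1 g2 0 m \<in> I3" by (simp add: F_03 I3_0)
    show "\<And>x y. F g1 g2 x m \<in> I3 \<Longrightarrow> F g1 g2 y m \<in> I3 \<Longrightarrow> F g1 g2 (x + y) m \<in> I3" by (simp add: F_add3 I3_add)
    show "\<And>c x. F g1 g2 x m \<in> I3 \<Longrightarrow> F g1 g2 (smL c x) m \<in> I3" by (simp add: F_sm3 I3_sm)
    show "\<And>g. gen g \<Longrightarrow> F g1 g2 g m \<in> I3" using gen_case that m by blast
  qed
  have B: "\<forall>z. F g1 y z m \<in> I3" if "gen g1" for g1 y
  proof (rule all_l[where Q = "\<lambda>y. \<forall>z. F g1 y z m \<in> I3"])
    show "\<forall>z. F g1 0 z m \<in> I3" by (simp add: F_02 I3_0)
    show "\<And>x y. \<forall>z. F g1 x z m \<in> I3 \<Longrightarrow> \<forall>z. F g1 y z m \<in> I3 \<Longrightarrow> \<forall>z. F g1 (x + y) z m \<in> I3" by (simp add: F_add2 I3_add)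
    show "\<And>c x. \<forall>z. F g1 x z m \<in> I3 \<Longrightarrow> \<forall>z. F g1 (smL c x) z m \<in> I3" by (simp add: F_sm2 I3_sm)
    show "\<And>g. gen g \<Longrightarrow> \<forall>z. F g1 g z m \<in> I3" using A that by blast
  qed
  have "\<forall>y z. F x y z m \<in> I3"
  proof (rule all_l[where Q = "\<lambda>x. \<forall>y z. F x y z m \<in> I3"])
    show "\<forall>y z. F 0 y z m \<in> I3" by (simp add: F_01 I3_0)
    show "\<And>x y. \<forall>y' z. F x y' z m \<in> I3 \<Longrightarrow> \<forall>y' z. F y y' z m \<in> I3 \<Longrightarrow> \<forall>y' z. F (x + y) y' z m \<in> I3" by (simp add: F_add1 I3_add)
    show "\<And>c x. \<forall>y z. F x y z m \<in> I3 \<Longrightarrow> \<forall>y z. F (smL c x) y z m \<in> I3" by (simp add: F_sm1 I3_sm)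
    show "\<And>g. gen g \<Longrightarrow> \<forall>y z. F g y z m \<in> I3" using B by blast
  qed
  thus ?thesis by blast
qed

end

theorem lemma4p2:
  fixes smR :: "'k::comm_ring_1 \<Rightarrow> 'r::ring_1 \<Rightarrow> 'r"
    and smL :: "'k \<Rightarrow> 'l::ab_group_add \<Rightarrow> 'l"
    and br :: "'l \<Rightarrow> 'l \<Rightarrow> 'l"
    and X :: "nat \<Rightarrow> nat \<Rightarrow> 'r \<Rightarrow> 'l"
    and H :: "'l set"
    and \<psi> :: "'l \<Rightarrow> 'l \<Rightarrow> int \<Rightarrow> 'r"
  assumes modR: "module smR"
    and algR: "\<And>c a b. smR c (a * b) = smR c a * b \<and> smR c (a * b) = a * smR c b"
    and freeR: "\<exists>B. \<not> module.dependent smR B \<and> module.span smR B = UNIV \<and> (1::'r) \<in> B"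
    and modL: "module smL"
    and br_add1: "\<And>x x' y. br (x + x') y = br x y + br x' y"
    and br_add2: "\<And>x y y'. br x (y + y') = br x y + br x y'"
    and br_sm1: "\<And>c x y. br (smL c x) y = smL c (br x y)"
    and br_sm2: "\<And>c x y. br x (smL c y) = smL c (br x y)"
    and leibniz: "\<And>x y z. br x (br y z) = br (br x y) z - br (br x z) y"
    and X_add: "\<And>i j a b. X i j (a + b) = X i j a + X i j b"
    and X_sm: "\<And>i j c a. X i j (smR c a) = smL c (X i j a)"
    and rel1: "\<And>i j k a b. i \<in> {1,2,3} \<Longrightarrow> j \<in> {1,2,3} \<Longrightarrow> k \<in> {1,2,3} \<Longrightarrow>
                 i \<noteq> j \<Longrightarrow> j \<noteq> k \<Longrightarrow> i \<noteq> k \<Longrightarrow> br (X i j a) (X j k b) = X i k (a * b)"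
    and rel2: "\<And>i j k a b. i \<in> {1,2,3} \<Longrightarrow> j \<in> {1,2,3} \<Longrightarrow> k \<in> {1,2,3} \<Longrightarrow>
                 i \<noteq> j \<Longrightarrow> j \<noteq> k \<Longrightarrow> i \<noteq> k \<Longrightarrow> br (X i j a) (X k i b) = - X k j (b * a)"
    and rel3: "\<And>i j k l a b. (i, j) \<in> pairs3 \<Longrightarrow> (k, l) \<in> pairs3 \<Longrightarrow>
                 j \<noteq> k \<Longrightarrow> i \<noteq> l \<Longrightarrow> br (X i j a) (X k l b) = 0"
    and H_def: "H = module.span smL {br (X i j a) (X j i b) | i j a b. (i, j) \<in> pairs3}"
    and decomp: "\<And>x. \<exists>!(h, a). h \<in> H \<and> (\<forall>p. p \<notin> pairs3 \<longrightarrow> a p = 0) \<and>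
                   x = h + (\<Sum>(i, j)\<in>pairs3. X i j (a (i, j)))"
    and psi_add1: "\<And>x x' y m. \<psi> (x + x') y m = \<psi> x y m + \<psi> x' y m"
    and psi_add2: "\<And>x y y' m. \<psi> x (y + y') m = \<psi> x y m + \<psi> x y' m"
    and psi_sm1: "\<And>c x y m. \<psi> (smL c x) y m = smR c (\<psi> x y m)"
    and psi_sm2: "\<And>c x y m. \<psi> x (smL c y) m = smR c (\<psi> x y m)"
    and psi_row: "\<And>i j k a b. i \<in> {1,2,3} \<Longrightarrow> j \<in> {1,2,3} \<Longrightarrow> k \<in> {1,2,3} \<Longrightarrow>
                 i \<noteq> j \<Longrightarrow> j \<noteq> k \<Longrightarrow> i \<noteq> k \<Longrightarrow>
                 \<psi> (X i j a) (X i k b) = single6 (int i) (sgn3 j k * (a * b))"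
    and psi_col: "\<And>i j k a b. i \<in> {1,2,3} \<Longrightarrow> j \<in> {1,2,3} \<Longrightarrow> k \<in> {1,2,3} \<Longrightarrow>
                 i \<noteq> j \<Longrightarrow> j \<noteq> k \<Longrightarrow> i \<noteq> k \<Longrightarrow>
                 \<psi> (X i j a) (X k j b) = single6 (- int j) (sgn3 i k * (a * b))"
    and psi_other: "\<And>i j k l a b. (i, j) \<in> pairs3 \<Longrightarrow> (k, l) \<in> pairs3 \<Longrightarrow>
                 \<not> (i = k \<and> j \<noteq> l) \<Longrightarrow> \<not> (j = l \<and> i \<noteq> k) \<Longrightarrow> \<psi> (X i j a) (X k l b) = (\<lambda>m. 0)"
    and psi_H1: "\<And>h y. h \<in> H \<Longrightarrow> \<psi> h y = (\<lambda>m. 0)"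
    and psi_H2: "\<And>x h. h \<in> H \<Longrightarrow> \<psi> x h = (\<lambda>m. 0)"
  shows "\<forall>x y z. \<forall>m \<in> {1, 2, 3, -1, -2, -3}.
           \<psi> x (br y z) m + \<psi> (br x z) y m - \<psi> (br x y) z m \<in> (I3 :: 'r set)"
proof -
  interpret stl smR smL br X H \<psi>
    by (rule stl.intro) (rule assms; assumption)+
  show ?thesis using main unfolding F_def by blast
qed

end
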